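(* Let $s,t,z$ be positive integers. For $\lambda\in\{0,\dots,z\}$ let $\theta=ts+\lambda$, $q=\min\{\lfloor\frac{z-1}{\lambda}\rfloor,t-1\}$, let $\mathbf P(C_A),\mathbf P(C_B),\mathbf P(S_A),\mathbf P(S_B)$ be the exponent sets described in the context, and let $N(\lambda)=\big|(\mathbf P(C_A)\cup\mathbf P(S_A))+(\mathbf P(C_B)\cup\mathbf P(S_B))\big|$ be the number of workers needed by AGE-CMPC with parameter $\lambda$. The number of workers required by AGE-CMPC is $N_{\text{AGE-CMPC}}=\min_{\lambda\in\{0,\dots,z\}}N(\lambda)$. Then $N_{\text{AGE-CMPC}}=2s+2z-1$ if $t=1$, and $N_{\text{AGE-CMPC}}=\min_{\lambda\in\{0,\dots,z\}}\Gamma(\lambda)$ if $t\ge2$, where $\Gamma(\lambda)=\Upsilon_1=2st^2+2z-1$ if $z>ts-s$, $\lambda=0$; $\Upsilon_2=st^2+3st-2s+t(z-1)+1$ if $z\le ts-s$, $\lambda=0$; $\Upsilon_3=2ts+(ts+z)(t-1)+2z-1$ if $\lambda=z$; $\Upsilon_4=(q+2)ts+\theta(t-1)+2z-1$ if $z>ts$, $0<\lambda<z$; $\Upsilon_5=3ts+\theta(t-1)+2z-1$ if $z\le ts$, $0<\lambda<z$, $ts<\lambda+s-1$; $\Upsilon_6=2ts+\theta(t-1)+(q+2)z-q-1$ if $\lambda+s-1<z\le ts$, $0<\lambda<z$, $q\lambda\ge s$; $\Upsilon_7=\theta(t+1)+q(z-1)-2\lambda+z+ts+\min\{0,z+s(1-t)-\lambda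 q-1\}$ if $\lambda+s-1<z\le ts$, $0<\lambda<z$, $q\lambda<s$; $\Upsilon_8=2ts+\theta(t-1)+3z+(\lambda+s-1)q-\lambda-s-1$ if $z\le\lambda+s-1\le ts$, $0<\lambda<z$, $q\lambda\ge s$; $\Upsilon_9=\theta(t+1)+q(s-1)-3\lambda+3z-1+\min\{0,ts-z+1+\lambda q-s\}$ if $z\le\lambda+s-1\le ts$, $0<\lambda<z$, $q\lambda<s$.
   Context: AGE-CMPC with parameter $\lambda$ uses $F_A=C_A+S_A$, $F_B=C_B+S_B$ with exponent sets: $\mathbf P(C_A)=\{j+si:0\le i\le t-1,0\le j\le s-1\}$, $\mathbf P(C_B)=\{(s-1-k)+\theta l:0\le k\le s-1,0\le l\le t-1\}$; $\mathbf P(S_A)=\{ts+\theta l+w:0\le l\le q-1,0\le w\le\lambda-1\}\cup\{ts+\theta q+u:0\le u\le z-1-q\lambda\}$ if $z>\lambda$ and $t\ne1$, and $\mathbf P(S_A)=\{ts+u:0\le u\le z-1\}$ if $z\le\lambda$ or $t=1$; $\mathbf P(S_B)=\{ts+\theta(t-1)+r:0\le r\le z-1\}$. Here $\mathbf X+\mathbf Y=\{a+b:a\in\mathbf X,b\in\mathbf Y\}$, and the required number of workers equals the number of monomials of $F_A(x)F_B(x)$. Convention: for $\lambda=0$ the quotient $\frac{z-1}{\lambda}$ is treated as $+\infty$, so $q=t-1$. *)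

theory Defs
  imports Main
begin

definition sumset :: "nat set \<Rightarrow> nat set \<Rightarrow> nat set" where
  "sumset X Y = {a + b | a b. a \<in> X \<and> b \<in> Y}"

definition age_theta :: "nat \<Rightarrow> nat \<Rightarrow> nat \<Rightarrow> nat" where
  "age_theta s t lam = t * s + lam"

text \<open>q = min (floor((z-1)/lambda), t-1); for lambda = 0 the quotient is +infinity, so q = t-1.\<close>
definition age_q :: "nat \<Rightarrow> nat \<Rightarrow> nat \<Rightarrow> nat" where
  "age_q t z lam = (if lam = 0 then t - 1 else min ((z - 1) div lam) (t - 1))"

definition P_CA :: "nat \<Rightarrow> nat \<Rightarrow> nat set" where
  "P_CA s t = {j + s * i | i j. i \<le> t - 1 \<and> j \<le> s - 1}"

definition P_CB :: "nat \<Rightarrow> nat \<Rightarrow> nat \<Rightarrow> nat set" where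
  "P_CB s t lam = {(s - 1 - k) + age_theta s t lam * l | k l. k \<le> s - 1 \<and> l \<le> t - 1}"

definition P_SA :: "nat \<Rightarrow> nat \<Rightarrow> nat \<Rightarrow> nat \<Rightarrow> nat set" where
  "P_SA s t z lam =
     (if z > lam \<and> t \<noteq> 1 then
        {t * s + age_theta s t lam * l + w | l w. l < age_q t z lam \<and> w < lam}
        \<union> {t * s + age_theta s t lam * age_q t z lam + u | u. u \<le> z - 1 - age_q t z lam * lam}
      else {t * s + u | u. u \<le> z - 1})"

definition P_SB :: "nat \<Rightarrow> nat \<Rightarrow> nat \<Rightarrow> nat \<Rightarrow> nat set" where
  "P_SB s t z lam = {t * s + age_theta s t lam * (t - 1) + r | r. r \<le> z - 1}"

definition N_age :: "nat \<Rightarrow> nat \<Rightarrow> nat \<Rightarrow> nat \<Rightarrow> nat" where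
  "N_age s t z lam = card (sumset (P_CA s t \<union> P_SA s t z lam) (P_CB s t lam \<union> P_SB s t z lam))"

definition N_AGE_CMPC :: "nat \<Rightarrow> nat \<Rightarrow> nat \<Rightarrow> nat" where
  "N_AGE_CMPC s t z = Min ((\<lambda>lam. N_age s t z lam) ` {0..z})"

text \<open>Gamma(lambda), computed over the integers (uses min{0,...}).\<close>
definition Gamma :: "nat \<Rightarrow> nat \<Rightarrow> nat \<Rightarrow> nat \<Rightarrow> int" where
  "Gamma s' t' z' lam' =
    (let s = int s'; t = int t'; z = int z'; lam = int lam';
         th = t * s + lam; q = int (age_q t' z' lam') in
     if lam = 0 then
       (if z > t * s - s then 2 * s * t^2 + 2 * z - 1
        else s * t^2 + 3 * s * t - 2 * s + t * (z - 1) + 1)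
     else if lam = z then 2 * t * s + (t * s + z) * (t - 1) + 2 * z - 1
     else if z > t * s then (q + 2) * t * s + th * (t - 1) + 2 * z - 1
     else if t * s < lam + s - 1 then 3 * t * s + th * (t - 1) + 2 * z - 1
     else if lam + s - 1 < z then
       (if q * lam \<ge> s then 2 * t * s + th * (t - 1) + (q + 2) * z - q - 1
        else th * (t + 1) + q * (z - 1) - 2 * lam + z + t * s + min 0 (z + s * (1 - t) - lam * q - 1))
     else
       (if q * lam \<ge> s then 2 * t * s + th * (t - 1) + 3 * z + (lam + s - 1) * q - lam - s - 1
        else th * (t + 1) + q * (s - 1) - 3 * lam + 3 * z - 1 + min 0 (t * s - z + 1 + lam * q - s)))"

end

theory Submission
  imports Defs
begin

lemma mem_sumsetI: "u \<in> X \<Longrightarrow> v \<in> Y \<Longrightarrow> x = u + v \<Longrightarrow> x \<in> sumset X Y"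
  unfolding sumset_def by blast

lemma mem_sumsetE: "x \<in> sumset X Y \<Longrightarrow> (\<And>u v. u \<in> X \<Longrightarrow> v \<in> Y \<Longrightarrow> x = u + v \<Longrightarrow> P) \<Longrightarrow> P"
  unfolding sumset_def by blast

lemma ivl_sum:
  assumes "{c..d} \<subseteq> X" "{e..f} \<subseteq> Y" "c \<le> d" "e \<le> f" "c + e \<le> x" "x \<le> d + f"
  shows "x \<in> sumset X Y"
proof -
  define u where "u = max c (x - f)"
  have "u \<in> X" using assms unfolding u_def by auto
  moreover have "x - u \<in> {e..f}" using assms unfolding u_def by auto
  then have "x - u \<in> Y" using assms by auto
  moreover have "x = u + (x - u)" using assms unfolding u_def by auto
  ultimately show ?thesis by (rule mem_sumsetI)
qed

lemma chain_card:
  fixes L R :: "nat \<Rightarrow> nat"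
  assumes "\<forall>i<n. L i \<le> L (Suc i) \<and> R i \<le> R (Suc i)" "\<forall>i\<le>n. L i \<le> R i"
  shows "card (\<Union>i\<le>n. {L i..R i}) + (\<Sum>i<n. L (Suc i) - Suc (R i)) = Suc (R n) - L 0"
  using assms
proof (induction n)
  case 0
  then show ?case by simp
next
  case (Suc n)
  let ?U = "\<Union>i\<le>n. {L i..R i}"
  have mL: "\<forall>i\<le>n. L 0 \<le> L i"
  proof (intro allI impI)
    fix i assume "i \<le> n" then show "L 0 \<le> L i"
    proof (induction i)
      case (Suc i) then show ?case using Suc.prems Suc.IH \<open>\<forall>i<Suc n. L i \<le> L (Suc i) \<and> R i \<le> R (Suc i)\<close>
        by (metis Suc_leD le_trans less_Suc_eq_le)
    qed simp
  qed
  have mR: "\<forall>i\<le>n. R i \<le> R n"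
  proof (intro allI impI)
    fix i assume "i \<le> n" then show "R i \<le> R n"
    proof (induction n rule: dec_induct)
      case (step m)
      have "R m \<le> R (Suc m)" using step(2) \<open>\<forall>i<Suc n. L i \<le> L (Suc i) \<and> R i \<le> R (Suc i)\<close> by auto
      then show ?case using step by linarith
    qed simp
  qed
  have sub: "?U \<subseteq> {L 0..R n}"
  proof
    fix x assume "x \<in> ?U"
    then obtain i where "i \<le> n" "x \<in> {L i..R i}" by blast
    then show "x \<in> {L 0..R n}" using mL mR by force
  qed
  have sub2: "{L (Suc n)..R n} \<subseteq> ?U"
  proof
    fix x assume "x \<in> {L (Suc n)..R n}"
    moreover have "L n \<le> L (Suc n)" using Suc.prems by auto
    ultimately have "x \<in> {L n..R n}" by auto
    then show "x \<in> ?U" by blast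
  qed
  have eq: "(\<Union>i\<le>Suc n. {L i..R i}) = ?U \<union> {max (L (Suc n)) (Suc (R n))..R (Suc n)}"
    using sub2 unfolding atMost_Suc by auto
  have disj: "?U \<inter> {max (L (Suc n)) (Suc (R n))..R (Suc n)} = {}" using sub by auto
  have IH: "card ?U + (\<Sum>i<n. L (Suc i) - Suc (R i)) = Suc (R n) - L 0"
    using Suc by auto
  have "card (\<Union>i\<le>Suc n. {L i..R i}) = card ?U + card {max (L (Suc n)) (Suc (R n))..R (Suc n)}"
    unfolding eq by (rule card_Un_disjoint) (use disj in auto)
  moreover have "L 0 \<le> R n"
  proof -
    have "L 0 \<le> L n" using mL by auto
    moreover have "L n \<le> R n" using Suc.prems(2) by auto
    ultimately show ?thesis by linarith
  qed
  moreover have "L n \<le> L (Suc n)" "R n \<le> R (Suc n)" "L (Suc n) \<le> R (Suc n)" using Suc.prems by auto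
  ultimately show ?case using IH by (simp add: max_def split: if_splits)
qed

lemma mem_CA: assumes "s > 0" "t > 0" shows "x \<in> P_CA s t \<longleftrightarrow> x < t * s"
proof
  assume "x \<in> P_CA s t"
  then obtain i j where ij: "i \<le> t - 1" "j \<le> s - 1" "x = j + s * i" unfolding P_CA_def by blast
  have "s * i \<le> s * (t - 1)" using ij by simp
  moreover have "s * (t - 1) + s = t * s" using assms by (cases t) (auto simp: algebra_simps)
  ultimately show "x < t * s" using ij assms by linarith
next
  assume x: "x < t * s"
  have "x div s < t" using x assms by (simp add: div_less_iff_less_mult mult.commute)
  moreover have "x mod s < s" using assms by simp
  moreover have "x = x mod s + s * (x div s)" by simp
  ultimately have "x div s \<le> t - 1" "x mod s \<le> s - 1" "x = x mod s + s * (x div s)" by auto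
  then show "x \<in> P_CA s t" unfolding P_CA_def by blast
qed

lemma mem_CB: "x \<in> P_CB s t lam \<longleftrightarrow> (\<exists>m c. m \<le> t - 1 \<and> c \<le> s - 1 \<and> x = age_theta s t lam * m + c)"
proof
  assume "x \<in> P_CB s t lam"
  then obtain k l where "k \<le> s - 1" "l \<le> t - 1" "x = (s - 1 - k) + age_theta s t lam * l"
    unfolding P_CB_def by blast
  then show "\<exists>m c. m \<le> t - 1 \<and> c \<le> s - 1 \<and> x = age_theta s t lam * m + c"
    by (intro exI[of _ l] exI[of _ "s - 1 - k"]) auto
next
  assume "\<exists>m c. m \<le> t - 1 \<and> c \<le> s - 1 \<and> x = age_theta s t lam * m + c"
  then obtain m c where "m \<le> t - 1" "c \<le> s - 1" "x = age_theta s t lam * m + c" by blast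
  then show "x \<in> P_CB s t lam" unfolding P_CB_def
    by (intro CollectI exI[of _ "s - 1 - c"] exI[of _ m]) auto
qed

lemma mem_SB: "x \<in> P_SB s t z lam \<longleftrightarrow> (\<exists>c. c \<le> z - 1 \<and> x = t * s + age_theta s t lam * (t - 1) + c)"
  unfolding P_SB_def by blast

lemma mem_SA_gen: assumes "lam < z" "t \<noteq> 1"
  shows "x \<in> P_SA s t z lam \<longleftrightarrow>
    (\<exists>l w. l < age_q t z lam \<and> w < lam \<and> x = t * s + age_theta s t lam * l + w) \<or>
    (\<exists>u. u \<le> z - 1 - age_q t z lam * lam \<and> x = t * s + age_theta s t lam * age_q t z lam + u)"
  using assms unfolding P_SA_def by auto

lemma mem_SA_small: assumes "\<not> (lam < z \<and> t \<noteq> 1)"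
  shows "x \<in> P_SA s t z lam \<longleftrightarrow> (\<exists>u. u \<le> z - 1 \<and> x = t * s + u)"
  using assms unfolding P_SA_def by auto

lemma N_gen_set:
  assumes s0: "s > 0" and t1: "t = Suc t1" and t1pos: "t1 \<ge> 1" and l0: "0 < lam" and lz: "lam < z"
    and a_def: "a = t * s" and th_def: "th = a + lam" and q_def: "q = age_q t z lam"
    and r_def: "r = z - 1 - q * lam" and p: "q = Suc p"
    and M1_def: "M1 = max z (max (lam + s) (r + 1 + s))" and M2_def: "M2 = max z (r + 1 + s)"
    and Mi_def: "Mi = (\<lambda>i. if i = p then M2 else M1)"
    and L_def: "L = (\<lambda>i. if i = 0 then 0 else th * t + th * (i - 1) + 2 * a)"
    and R_def: "R = (\<lambda>i. if i = q then th * t + th * p + 2 * a + r + z - 1 else th * t + th * i + a + Mi i - 2)"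
  shows "sumset (P_CA s t \<union> P_SA s t z lam) (P_CB s t lam \<union> P_SB s t z lam) = (\<Union>i\<le>q. {L i..R i})"
proof -
  let ?A = "P_CA s t \<union> P_SA s t z lam"
  let ?B = "P_CB s t lam \<union> P_SB s t z lam"
  have thdef: "age_theta s t lam = th" by (simp add: age_theta_def a_def th_def)
  have q_eq: "q = min ((z - 1) div lam) t1" using l0 t1 unfolding q_def age_q_def by auto
  have qle: "q \<le> t1" using q_eq by auto
  have "q \<le> (z - 1) div lam" using q_eq by auto
  then have "q * lam \<le> (z - 1) div lam * lam" by simp
  also have "\<dots> \<le> z - 1" by simp
  finally have qlam: "q * lam \<le> z - 1" .
  have sa: "s \<le> a" using a_def t1 by simp
  have tht: "th * t = th * t1 + th" using t1 by simp
  have thq: "th * q = th * p + th" using p by simp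
  have z2: "z \<ge> 2" using l0 lz by linarith
  have M1ge: "M1 \<ge> z" "M1 \<ge> lam + s" "M1 \<ge> r + 1 + s" using M1_def by auto
  have M2ge: "M2 \<ge> z" "M2 \<ge> r + 1 + s" using M2_def by auto
  have Mige: "Mi i \<ge> z" "Mi i \<ge> r + 1 + s" for i using M1ge M2ge Mi_def by auto
  have CA: "u \<in> P_CA s t \<longleftrightarrow> u < a" for u using mem_CA[OF s0, of t u] t1 a_def by simp
  have SA: "u \<in> P_SA s t z lam \<longleftrightarrow> (\<exists>l w. l < q \<and> w < lam \<and> u = a + th * l + w) \<or> (\<exists>w. w \<le> r \<and> u = a + th * q + w)" for u
    using mem_SA_gen[OF lz, of t u s] t1 t1pos unfolding thdef a_def[symmetric] q_def[symmetric] r_def[symmetric] by simp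
  have memA: "u \<in> ?A \<longleftrightarrow> u < a \<or> (\<exists>l w. l < q \<and> w < lam \<and> u = a + th * l + w) \<or> (\<exists>w. w \<le> r \<and> u = a + th * q + w)" for u
    using CA[of u] SA[of u] by blast
  have CB: "v \<in> P_CB s t lam \<longleftrightarrow> (\<exists>m c. m \<le> t1 \<and> c \<le> s - 1 \<and> v = th * m + c)" for v
    using mem_CB[of v s t lam] t1 unfolding thdef by simp
  have SB: "v \<in> P_SB s t z lam \<longleftrightarrow> (\<exists>c. c \<le> z - 1 \<and> v = a + th * t1 + c)" for v
    using mem_SB[of v s t z lam] t1 unfolding thdef a_def[symmetric] by simp
  have memB: "v \<in> ?B \<longleftrightarrow> (\<exists>m c. m \<le> t1 \<and> c \<le> s - 1 \<and> v = th * m + c) \<or> (\<exists>c. c \<le> z - 1 \<and> v = a + th * t1 + c)" for v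
    using CB[of v] SB[of v] by blast
  have inU: "i \<le> q \<Longrightarrow> L i \<le> x \<Longrightarrow> x \<le> R i \<Longrightarrow> x \<in> (\<Union>i\<le>q. {L i..R i})" for i x by auto
  have R0: "R 0 = th * t + a + Mi 0 - 2" using R_def p by simp
  have Rj: "j \<le> p \<Longrightarrow> R j = th * t + th * j + a + Mi j - 2" for j using R_def p by simp
  have Lj: "L (Suc j) = th * t + th * j + 2 * a" for j using L_def by simp
  have L0: "L 0 = 0" using L_def by simp
  have Rq: "R q = th * t + th * p + 2 * a + r + z - 1" using R_def by simp
  show ?thesis
  proof
    show "sumset ?A ?B \<subseteq> (\<Union>i\<le>q. {L i..R i})"
    proof
      fix x assume "x \<in> sumset ?A ?B"
      then obtain u v where uA: "u \<in> ?A" and vB: "v \<in> ?B" and xuv: "x = u + v" by (rule mem_sumsetE)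
      from vB[unfolded memB] show "x \<in> (\<Union>i\<le>q. {L i..R i})"
      proof (elim disjE exE conjE)
        fix m c assume m: "m \<le> t1" and c: "c \<le> s - 1" and v: "v = th * m + c"
        have thmle: "th * m \<le> th * t1" using m by simp
        from uA[unfolded memA] show ?thesis
        proof (elim disjE exE conjE)
          assume "u < a"
          have "x \<le> R 0" unfolding R0 using \<open>u < a\<close> xuv v thmle tht sa Mige(1)[of 0] z2 th_def c by linarith
          then show ?thesis using inU[of 0 x] L0 by simp
        next
          fix l w assume l: "l < q" and w: "w < lam" and u: "u = a + th * l + w"
          have dist: "th * l + th * m = th * (l + m)" by (simp add: algebra_simps)
          show ?thesis
          proof (cases "l + m \<le> t1")
            case True
            then have "th * (l + m) \<le> th * t1" by simp
            then have "x \<le> R 0" unfolding R0 using xuv v u tht sa Mige(1)[of 0] z2 th_def dist w c by linarith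
            then show ?thesis using inU[of 0 x] L0 by simp
          next
            case False
            then obtain j where j: "l + m = t + j" using t1 by (metis add_Suc_right le_add_diff_inverse not_less_eq_eq plus_1_eq_Suc)
            have jp: "j < p" using j l m p t1 by linarith
            have dj: "th * (l + m) = th * t + th * j" using j by (simp add: algebra_simps)
            show ?thesis
            proof (cases j)
              case 0
              then have "Mi 0 = M1" using jp Mi_def by simp
              moreover have "th * j = 0" using 0 by simp
              ultimately have "x \<le> R 0" unfolding R0 using xuv v u M1ge dist dj w c s0 by linarith
              then show ?thesis using inU[of 0 x] L0 by simp
            next
              case (Suc j')
              have "Mi j = M1" using jp Mi_def by simp
              moreover have "th * j = th * j' + th" using Suc by simp
              moreover have "R j = th * t + th * j + a + Mi j - 2" using Rj[of j] jp by simp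
              moreover have "L j = th * t + th * j' + 2 * a" using Lj[of j'] Suc by simp
              ultimately have "x \<le> R j" "L j \<le> x" using xuv v u M1ge dist dj w c th_def s0 by linarith+
              then show ?thesis using inU[of j x] jp p by simp
            qed
          qed
        next
          fix w assume w: "w \<le> r" and u: "u = a + th * q + w"
          have dist: "th * q + th * m = th * (q + m)" by (simp add: algebra_simps)
          show ?thesis
          proof (cases "q + m \<le> t1")
            case True
            then have "th * (q + m) \<le> th * t1" by simp
            then have "x \<le> R 0" unfolding R0 using xuv v u tht Mige(2)[of 0] th_def dist w c s0 by linarith
            then show ?thesis using inU[of 0 x] L0 by simp
          next
            case False
            then obtain j where j: "q + m = t + j" using t1 by (metis add_Suc_right le_add_diff_inverse not_less_eq_eq plus_1_eq_Suc)
            have jp: "j \<le> p" using j qle m p t1 by linarith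
            have dj: "th * (q + m) = th * t + th * j" using j by (simp add: algebra_simps)
            show ?thesis
            proof (cases j)
              case 0
              then have "th * j = 0" by simp
              then have "x \<le> R 0" unfolding R0 using xuv v u Mige(2)[of 0] dist dj w c s0 by linarith
              then show ?thesis using inU[of 0 x] L0 by simp
            next
              case (Suc j')
              have "th * j = th * j' + th" using Suc by simp
              moreover have "R j = th * t + th * j + a + Mi j - 2" using Rj[of j] jp by simp
              moreover have "L j = th * t + th * j' + 2 * a" using Lj[of j'] Suc by simp
              ultimately have "x \<le> R j" "L j \<le> x" using xuv v u Mige(2)[of j] dist dj w c th_def s0 by linarith+
              then show ?thesis using inU[of j x] jp p by simp
            qed
          qed
        qed
      next
        fix c assume c: "c \<le> z - 1" and v: "v = a + th * t1 + c"
        from uA[unfolded memA] show ?thesis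
        proof (elim disjE exE conjE)
          assume "u < a"
          then have "x \<le> R 0" unfolding R0 using xuv v tht Mige(1)[of 0] z2 th_def c by linarith
          then show ?thesis using inU[of 0 x] L0 by simp
        next
          fix l w assume l: "l < q" and w: "w < lam" and u: "u = a + th * l + w"
          show ?thesis
          proof (cases l)
            case 0
            then have "th * l = 0" by simp
            then have "x \<le> R 0" unfolding R0 using xuv v u tht Mige(1)[of 0] th_def w c z2 by linarith
            then show ?thesis using inU[of 0 x] L0 by simp
          next
            case (Suc l')
            have "th * l = th * l' + th" using Suc by simp
            moreover have "R l = th * t + th * l + a + Mi l - 2" using Rj[of l] l p by simp
            moreover have "L l = th * t + th * l' + 2 * a" using Lj[of l'] Suc by simp
            ultimately have "x \<le> R l" "L l \<le> x" using xuv v u Mige(1)[of l] w c tht th_def z2 by linarith+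
            then show ?thesis using inU[of l x] l by simp
          qed
        next
          fix w assume w: "w \<le> r" and u: "u = a + th * q + w"
          have "L q = th * t + th * p + 2 * a" using Lj[of p] p by simp
          then have "x \<le> R q" "L q \<le> x" using Rq xuv v u w c thq tht l0 z2 by linarith+
          then show ?thesis using inU[of q x] by simp
        qed
      qed
    qed
  next
    show "(\<Union>i\<le>q. {L i..R i}) \<subseteq> sumset ?A ?B"
    proof
      fix x assume "x \<in> (\<Union>i\<le>q. {L i..R i})"
      then obtain i where iq: "i \<le> q" and xL: "L i \<le> x" and xR: "x \<le> R i" by auto
      have apos: "a \<ge> 1" using sa s0 by linarith
      have thpos: "th > 0" using th_def l0 by simp
      have iA0: "{0..a-1} \<subseteq> ?A"
      proof
        fix u assume "u \<in> {0..a-1}"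
        then have "u < a" using apos by auto
        then show "u \<in> ?A" using CA by blast
      qed
      have iAl: "{a + th * l..a + th * l + (lam - 1)} \<subseteq> ?A" if "l < q" for l
      proof
        fix u assume u: "u \<in> {a + th * l..a + th * l + (lam - 1)}"
        then have "u - (a + th * l) < lam" "u = a + th * l + (u - (a + th * l))" using l0 by auto
        then show "u \<in> ?A" using memA that by blast
      qed
      have iAq: "{a + th * q..a + th * q + r} \<subseteq> ?A"
      proof
        fix u assume u: "u \<in> {a + th * q..a + th * q + r}"
        then have "u - (a + th * q) \<le> r" "u = a + th * q + (u - (a + th * q))" by auto
        then show "u \<in> ?A" using memA by blast
      qed
      have iBm: "{th * m..th * m + (s - 1)} \<subseteq> ?B" if "m \<le> t1" for m
      proof
        fix v assume v: "v \<in> {th * m..th * m + (s - 1)}"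
        then have "v - th * m \<le> s - 1" "v = th * m + (v - th * m)" by auto
        then show "v \<in> ?B" using memB that by blast
      qed
      have iBS: "{a + th * t1..a + th * t1 + (z - 1)} \<subseteq> ?B"
      proof
        fix v assume v: "v \<in> {a + th * t1..a + th * t1 + (z - 1)}"
        then have "v - (a + th * t1) \<le> z - 1" "v = a + th * t1 + (v - (a + th * t1))" by auto
        then show "v \<in> ?B" using memB by blast
      qed
      have Mcases: "Mi j = z \<or> (Mi j = lam + s \<and> j \<noteq> p) \<or> Mi j = r + 1 + s" for j
        unfolding Mi_def M1_def M2_def by auto
      have thq0: "q \<ge> 1" using p by simp
      have pt1: "p < t1" using p qle by simp
      have Aq_Bm: "x \<in> sumset ?A ?B" if "th * t + th * j + a \<le> x" "x \<le> th * t + th * j + a + r + s - 1" "j \<le> p" for j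
      proof -
        define m where "m = t1 + j - p"
        have m1: "m \<le> t1" using that(3) m_def by simp
        have "q + m = t + j" using m_def p t1 that(3) pt1 by simp
        then have "th * q + th * m = th * t + th * j" by (metis distrib_left)
        then show ?thesis using ivl_sum[OF iAq iBm[OF m1]] that s0 by simp
      qed
      show "x \<in> sumset ?A ?B"
      proof (cases "i = 0")
        case True
        have xR0: "x \<le> th * t + a + Mi 0 - 2" using xR True R0 by simp
        have c1: ?thesis if "x < a + th * t1"
        proof -
          define m where "m = x div th"
          define om where "om = x mod th"
          have xmo: "x = th * m + om" unfolding m_def om_def by simp
          have o_lt: "om < th" unfolding om_def using thpos by simp
          have "x < Suc t1 * th" using that tht th_def by (simp add: algebra_simps)
          then have "m < Suc t1" unfolding m_def using div_less_iff_less_mult[OF thpos] by blast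
          then have m1: "m \<le> t1" by simp
          show ?thesis
          proof (cases "om \<le> a + s - 2")
            case True
            then show ?thesis using ivl_sum[OF iA0 iBm[OF m1], of x] xmo apos s0 by simp
          next
            case False
            then show ?thesis using ivl_sum[OF iAl[of 0] iBm[OF m1], of x] xmo o_lt th_def thq0 l0 s0 by simp
          qed
        qed
        have c2: ?thesis if "a + th * t1 \<le> x" "x \<le> th * t + s - 2"
          using that ivl_sum[OF iAl[of 0] iBm[of t1], of x] tht th_def thq0 l0 s0 by simp
        have c3: ?thesis if "a + th * t1 \<le> x" "x \<le> 2 * a + th * t1 + z - 2"
          using that ivl_sum[OF iA0 iBS, of x] apos z2 by simp
        have c4: ?thesis if "2 * a + th * t1 \<le> x" "x \<le> th * t + a + z - 2"
          using that ivl_sum[OF iAl[of 0] iBS, of x] tht th_def thq0 l0 z2 by simp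
        have c5: ?thesis if "th * t + a \<le> x" "x \<le> th * t + a + lam + s - 2" "p \<noteq> 0"
        proof -
          have "1 < q" using p that(3) by simp
          then show ?thesis using that ivl_sum[OF iAl[of 1] iBm[of t1], of x] tht th_def l0 s0 by simp
        qed
        have c6: ?thesis if "th * t + a \<le> x" "x \<le> th * t + a + r + s - 1"
          using that Aq_Bm[of 0] by simp
        show ?thesis
        proof (cases "x < a + th * t1")
          case True then show ?thesis by (rule c1)
        next
          case F1: False
          show ?thesis
          proof (cases "x \<le> th * t + s - 2")
            case True then show ?thesis using F1 c2 by simp
          next
            case F2: False
            have G2: "a + th * t1 \<le> x" using F1 by simp
            show ?thesis
            proof (cases "x \<le> 2 * a + th * t1 + z - 2")
              case True then show ?thesis using G2 c3 by simp
            next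
              case F3: False
              have G3: "2 * a + th * t1 \<le> x" using F3 z2 by linarith
              show ?thesis
              proof (cases "x \<le> th * t + a + z - 2")
                case True then show ?thesis using G3 c4 by simp
              next
                case F4: False
                have G4: "th * t + a \<le> x" using F4 z2 by linarith
                from Mcases[of 0] show ?thesis
                proof (elim disjE conjE)
                  assume "Mi 0 = z" then show ?thesis using F4 xR0 by simp
                next
                  assume "Mi 0 = lam + s" "0 \<noteq> p"
                  then show ?thesis using c5 G4 xR0 by simp
                next
                  assume "Mi 0 = r + 1 + s"
                  then show ?thesis using c6 G4 xR0 by simp
                qed
              qed
            qed
          qed
        qed
      next
        case False
        show ?thesis
        proof (cases "i = q")
          case True
          have "x \<le> th * t + th * p + 2 * a + r + z - 1" "th * t + th * p + 2 * a \<le> x" using xR xL True Rq Lj[of p] p by auto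
          then show ?thesis using ivl_sum[OF iAq iBS, of x] thq tht z2 by simp
        next
          case False
          obtain j' where i: "i = Suc j'" using \<open>i \<noteq> 0\<close> by (cases i) auto
          have ip: "i \<le> p" using iq False p by simp
          have thi: "th * i = th * j' + th" using i by simp
          have xR': "x \<le> th * t + th * i + a + Mi i - 2" using xR Rj[OF ip] by simp
          have xL': "th * t + th * j' + 2 * a \<le> x" using xL Lj[of j'] i by simp
          have d1: ?thesis if "x \<le> th * t + th * i + a + z - 2"
          proof -
            have "i < q" using ip p by simp
            then show ?thesis using that xL' ivl_sum[OF iAl[of i] iBS, of x] thi tht th_def l0 z2 by simp
          qed
          have d2: ?thesis if "th * t + th * i + a \<le> x" "x \<le> th * t + th * i + a + lam + s - 2" "i \<noteq> p"
          proof -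
            have "Suc i < q" using ip p that(3) by simp
            moreover have "th * Suc i + th * t1 = th * t + th * i" using tht by simp
            ultimately show ?thesis using that ivl_sum[OF iAl[of "Suc i"] iBm[of t1], of x] th_def l0 s0 by simp
          qed
          have d3: ?thesis if "th * t + th * i + a \<le> x" "x \<le> th * t + th * i + a + r + s - 1"
            using that Aq_Bm[of i] ip by simp
          show ?thesis
          proof (cases "x \<le> th * t + th * i + a + z - 2")
            case True then show ?thesis by (rule d1)
          next
            case F: False
            have G: "th * t + th * i + a \<le> x" using F z2 by linarith
            from Mcases[of i] show ?thesis
            proof (elim disjE conjE)
              assume "Mi i = z" then show ?thesis using F xR' by simp
            next
              assume "Mi i = lam + s" "i \<noteq> p"
              then show ?thesis using d2 G xR' by simp
            next
              assume "Mi i = r + 1 + s"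
              then show ?thesis using d3 G xR' by simp
            qed
          qed
        qed
      qed
    qed
  qed
qed


lemma N_gen:
  assumes s0: "s > 0" and t2: "t \<ge> 2" and l0: "0 < lam" and lz: "lam < z"
  shows "N_age s t z lam + (age_q t z lam - 1) * (t * s + 1 - max z (max (lam + s) (z - age_q t z lam * lam + s)))
           + (t * s + 1 - max z (z - age_q t z lam * lam + s))
         = (t * s + lam) * t + (t * s + lam) * (age_q t z lam - 1) + 2 * (t * s) + (z - 1 - age_q t z lam * lam) + z"
proof -
  obtain t1 where t1: "t = Suc t1" using t2 by (cases t) auto
  have t1pos: "t1 \<ge> 1" using t2 t1 by simp
  define a where "a = t * s"
  define th where "th = a + lam"
  define q where "q = age_q t z lam"
  define r where "r = z - 1 - q * lam"
  have q_eq: "q = min ((z - 1) div lam) t1" using l0 t1 unfolding q_def age_q_def by auto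
  have "lam \<le> z - 1" using lz by simp
  then have "1 \<le> (z - 1) div lam" using l0 by (simp add: less_eq_div_iff_mult_less_eq)
  then have "q \<ge> 1" using q_eq t1pos by simp
  then obtain p where p: "q = Suc p" by (cases q) auto
  have qle: "q \<le> t1" using q_eq by auto
  have "q \<le> (z - 1) div lam" using q_eq by auto
  then have "q * lam \<le> (z - 1) div lam * lam" by simp
  also have "\<dots> \<le> z - 1" by simp
  finally have qlam: "q * lam \<le> z - 1" .
  have sa: "s \<le> a" using a_def t1 by simp
  have z2: "z \<ge> 2" using l0 lz by linarith
  define M1 where "M1 = max z (max (lam + s) (r + 1 + s))"
  define M2 where "M2 = max z (r + 1 + s)"
  define Mi where "Mi = (\<lambda>i::nat. if i = p then M2 else M1)"
  define L where "L = (\<lambda>i. if i = 0 then 0 else th * t + th * (i - 1) + 2 * a)"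
  define R where "R = (\<lambda>i. if i = q then th * t + th * p + 2 * a + r + z - 1 else th * t + th * i + a + Mi i - 2)"
  have set_eq: "sumset (P_CA s t \<union> P_SA s t z lam) (P_CB s t lam \<union> P_SB s t z lam) = (\<Union>i\<le>q. {L i..R i})"
    by (rule N_gen_set[OF s0 t1 t1pos l0 lz a_def th_def q_def r_def p M1_def M2_def Mi_def L_def R_def])
  have Mige: "Mi i \<ge> z" for i using Mi_def M1_def M2_def by auto
  have Mile: "Mi i \<le> th + Mi j" for i j
  proof -
    have "M1 \<le> th + M2" "M1 \<le> th + M1" "M2 \<le> th + M1" "M2 \<le> th + M2"
      unfolding M1_def M2_def th_def using sa by auto
    then show ?thesis unfolding Mi_def by auto
  qed
  have Rlt: "R i = th * t + th * i + a + Mi i - 2" if "i \<le> p" for i using that p R_def by simp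
  have Rq: "R q = th * t + th * p + 2 * a + r + z - 1" using R_def by simp
  have LS: "L (Suc i) = th * t + th * i + 2 * a" for i using L_def by simp
  have mono: "\<forall>i<q. L i \<le> L (Suc i) \<and> R i \<le> R (Suc i)"
  proof (intro allI impI conjI)
    fix i assume iq: "i < q"
    show "L i \<le> L (Suc i)" unfolding L_def by (cases i) auto
    show "R i \<le> R (Suc i)"
    proof (cases "Suc i = q")
      case True
      then have ip: "i = p" using p by simp
      have "M2 \<le> a + r + z + 1" unfolding M2_def using sa by auto
      moreover have "Mi i = M2" using ip Mi_def by simp
      ultimately show ?thesis using Rlt[of i] Rq True ip z2 by simp
    next
      case False
      then have ip: "Suc i \<le> p" using iq p by simp
      have "th * Suc i = th * i + th" by simp
      then show ?thesis using Rlt[of i] Rlt[OF ip] ip Mile[of i "Suc i"] Mige[of "Suc i"] z2 by simp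
    qed
  qed
  have nonempty: "\<forall>i\<le>q. L i \<le> R i"
  proof (intro allI impI)
    fix i assume iq: "i \<le> q"
    show "L i \<le> R i"
    proof (cases i)
      case 0 then show ?thesis using L_def by simp
    next
      case (Suc j)
      show ?thesis
      proof (cases "i = q")
        case True
        then have "j = p" using Suc p by simp
        then show ?thesis using True Rq LS[of j] Suc z2 by simp
      next
        case False
        then have ip: "i \<le> p" using iq p by simp
        have "th * i = th * j + th" using Suc by simp
        then show ?thesis using Rlt[OF ip] LS[of j] Suc Mige[of i] z2 th_def by simp
      qed
    qed
  qed
  have cc: "card (\<Union>i\<le>q. {L i..R i}) + (\<Sum>i<q. L (Suc i) - Suc (R i)) = Suc (R q) - L 0"
    by (rule chain_card[OF mono nonempty])
  have term_eq: "L (Suc i) - Suc (R i) = a + 1 - Mi i" if "i < q" for i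
  proof -
    have "i \<le> p" using that p by simp
    then show ?thesis using Rlt[of i] LS[of i] Mige[of i] z2 by simp
  qed
  have "(\<Sum>i<q. L (Suc i) - Suc (R i)) = (\<Sum>i<q. a + 1 - Mi i)"
    by (rule sum.cong) (auto simp: term_eq)
  also have "\<dots> = (\<Sum>i<p. a + 1 - Mi i) + (a + 1 - M2)" using p Mi_def by simp
  also have "(\<Sum>i<p. a + 1 - Mi i) = (\<Sum>i<p. a + 1 - M1)"
    by (rule sum.cong) (auto simp: Mi_def)
  also have "\<dots> = p * (a + 1 - M1)" by simp
  finally have sum_eq: "(\<Sum>i<q. L (Suc i) - Suc (R i)) = p * (a + 1 - M1) + (a + 1 - M2)" .
  have Nc: "N_age s t z lam = card (\<Union>i\<le>q. {L i..R i})"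
    unfolding N_age_def set_eq ..
  have SR: "Suc (R q) - L 0 = th * t + th * p + 2 * a + r + z" using Rq L_def z2 by simp
  have zq: "z - q * lam + s = r + 1 + s" using qlam r_def z2 by simp
  show ?thesis
    using cc sum_eq Nc SR zq p unfolding M1_def M2_def a_def[symmetric] th_def[symmetric] q_def[symmetric] r_def[symmetric]
    by simp
qed

lemma N_lamz:
  assumes s0: "s > 0" and t2: "t \<ge> 2" and z0: "z > 0"
  shows "N_age s t z z = 2 * (t * s) + (t * s + z) * (t - 1) + 2 * z - 1"
proof -
  obtain t1 where t1: "t = Suc t1" using t2 by (cases t) auto
  define a where "a = t * s"
  define th where "th = a + z"
  let ?A = "P_CA s t \<union> P_SA s t z z"
  let ?B = "P_CB s t z \<union> P_SB s t z z"
  have thdef: "age_theta s t z = th" by (simp add: age_theta_def a_def th_def)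
  have sa: "s \<le> a" using a_def t1 by simp
  have thpos: "th > 0" using th_def z0 by simp
  have CA: "u \<in> P_CA s t \<longleftrightarrow> u < a" for u using mem_CA[OF s0, of t u] t1 a_def by simp
  have SA: "u \<in> P_SA s t z z \<longleftrightarrow> (\<exists>w. w \<le> z - 1 \<and> u = a + w)" for u
    using mem_SA_small[of z z t u s] unfolding a_def by simp
  have memA: "u \<in> ?A \<longleftrightarrow> u \<le> a + z - 1" for u
  proof
    assume "u \<in> ?A" then show "u \<le> a + z - 1" using CA SA z0 by auto
  next
    assume u: "u \<le> a + z - 1"
    show "u \<in> ?A"
    proof (cases "u < a")
      case True then show ?thesis using CA by blast
    next
      case False
      then have "u - a \<le> z - 1" "u = a + (u - a)" using u by auto
      then show ?thesis using SA by blast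
    qed
  qed
  have CB: "v \<in> P_CB s t z \<longleftrightarrow> (\<exists>m c. m \<le> t1 \<and> c \<le> s - 1 \<and> v = th * m + c)" for v
    using mem_CB[of v s t z] t1 unfolding thdef by simp
  have SB: "v \<in> P_SB s t z z \<longleftrightarrow> (\<exists>c. c \<le> z - 1 \<and> v = a + th * t1 + c)" for v
    using mem_SB[of v s t z z] t1 unfolding thdef a_def[symmetric] by simp
  have memB: "v \<in> ?B \<longleftrightarrow> (\<exists>m c. m \<le> t1 \<and> c \<le> s - 1 \<and> v = th * m + c) \<or> (\<exists>c. c \<le> z - 1 \<and> v = a + th * t1 + c)" for v
    using CB[of v] SB[of v] by blast
  have tht: "th * t = th * t1 + th" using t1 by simp
  have set_eq: "sumset ?A ?B = {0..2 * a + th * t1 + 2 * z - 2}"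
  proof
    show "sumset ?A ?B \<subseteq> {0..2 * a + th * t1 + 2 * z - 2}"
    proof
      fix x assume "x \<in> sumset ?A ?B"
      then obtain u v where uA: "u \<in> ?A" and vB: "v \<in> ?B" and xuv: "x = u + v" by (rule mem_sumsetE)
      have u: "u \<le> a + z - 1" using uA memA by blast
      from vB[unfolded memB] show "x \<in> {0..2 * a + th * t1 + 2 * z - 2}"
      proof (elim disjE exE conjE)
        fix m c assume m: "m \<le> t1" and c: "c \<le> s - 1" and v: "v = th * m + c"
        have "th * m \<le> th * t1" using m by simp
        then have "x \<le> 2 * a + th * t1 + 2 * z - 2" using u c v xuv sa z0 s0 by linarith
        then show ?thesis by simp
      next
        fix c assume c: "c \<le> z - 1" and v: "v = a + th * t1 + c"
        then show ?thesis using u xuv z0 by simp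
      qed
    qed
  next
    have iA: "{0..a + z - 1} \<subseteq> ?A"
    proof
      fix u assume "u \<in> {0..a + z - 1}"
      then have "u \<le> a + z - 1" by simp
      then show "u \<in> ?A" using memA by blast
    qed
    have iBm: "{th * m..th * m + (s - 1)} \<subseteq> ?B" if "m \<le> t1" for m
    proof
      fix v assume v: "v \<in> {th * m..th * m + (s - 1)}"
      then have "v - th * m \<le> s - 1" "v = th * m + (v - th * m)" by auto
      then show "v \<in> ?B" using memB that by blast
    qed
    have iBS: "{a + th * t1..a + th * t1 + (z - 1)} \<subseteq> ?B"
    proof
      fix v assume v: "v \<in> {a + th * t1..a + th * t1 + (z - 1)}"
      then have "v - (a + th * t1) \<le> z - 1" "v = a + th * t1 + (v - (a + th * t1))" by auto
      then show "v \<in> ?B" using memB by blast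
    qed
    show "{0..2 * a + th * t1 + 2 * z - 2} \<subseteq> sumset ?A ?B"
    proof
      fix x assume x: "x \<in> {0..2 * a + th * t1 + 2 * z - 2}"
      show "x \<in> sumset ?A ?B"
      proof (cases "x < a + th * t1")
        case True
        define m where "m = x div th"
        define om where "om = x mod th"
        have xmo: "x = th * m + om" unfolding m_def om_def by simp
        have o_lt: "om < th" unfolding om_def using thpos by simp
        have "x < Suc t1 * th" using True th_def by (simp add: algebra_simps)
        then have "m < Suc t1" unfolding m_def using div_less_iff_less_mult[OF thpos] by blast
        then have m1: "m \<le> t1" by simp
        show ?thesis using ivl_sum[OF iA iBm[OF m1], of x] xmo o_lt th_def z0 s0 by simp
      next
        case False
        then show ?thesis using ivl_sum[OF iA iBS, of x] x z0 by simp
      qed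
    qed
  qed
  have "N_age s t z z = card {0..2 * a + th * t1 + 2 * z - 2}"
    unfolding N_age_def set_eq ..
  also have "\<dots> = 2 * a + th * t1 + 2 * z - 1" using z0 by simp
  finally show ?thesis unfolding a_def th_def using t1 by simp
qed

lemma N_t1:
  assumes s0: "s > 0" and z0: "z > 0"
  shows "N_age s 1 z lam = 2 * s + 2 * z - 1"
proof -
  let ?A = "P_CA s 1 \<union> P_SA s 1 z lam"
  let ?B = "P_CB s 1 lam \<union> P_SB s 1 z lam"
  have memA: "u \<in> ?A \<longleftrightarrow> u \<le> s + z - 1" for u
  proof -
    have CA: "u \<in> P_CA s 1 \<longleftrightarrow> u < s" using mem_CA[OF s0, of 1 u] by simp
    have SA: "u \<in> P_SA s 1 z lam \<longleftrightarrow> (\<exists>w. w \<le> z - 1 \<and> u = s + w)" using mem_SA_small[of lam z 1 u s] by simp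
    show ?thesis
    proof
      assume "u \<in> ?A" then show "u \<le> s + z - 1" using CA SA z0 by auto
    next
      assume u: "u \<le> s + z - 1"
      show "u \<in> ?A"
      proof (cases "u < s")
        case True then show ?thesis using CA by blast
      next
        case False
        then have "u - s \<le> z - 1" "u = s + (u - s)" using u by auto
        then show ?thesis using SA by blast
      qed
    qed
  qed
  have memB: "v \<in> ?B \<longleftrightarrow> v \<le> s + z - 1" for v
  proof -
    have CB: "v \<in> P_CB s 1 lam \<longleftrightarrow> v \<le> s - 1" using mem_CB[of v s 1 lam] by simp
    have SB: "v \<in> P_SB s 1 z lam \<longleftrightarrow> (\<exists>c. c \<le> z - 1 \<and> v = s + c)" using mem_SB[of v s 1 z lam] by simp
    show ?thesis
    proof
      assume "v \<in> ?B" then show "v \<le> s + z - 1" using CB SB z0 by auto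
    next
      assume v: "v \<le> s + z - 1"
      show "v \<in> ?B"
      proof (cases "v < s")
        case True then show ?thesis using CB s0 by auto
      next
        case False
        then have "v - s \<le> z - 1" "v = s + (v - s)" using v by auto
        then show ?thesis using SB by blast
      qed
    qed
  qed
  have set_eq: "sumset ?A ?B = {0..2 * s + 2 * z - 2}"
  proof
    show "sumset ?A ?B \<subseteq> {0..2 * s + 2 * z - 2}"
    proof
      fix x assume "x \<in> sumset ?A ?B"
      then obtain u v where "u \<in> ?A" "v \<in> ?B" "x = u + v" by (rule mem_sumsetE)
      then show "x \<in> {0..2 * s + 2 * z - 2}" using memA memB s0 z0 by auto
    qed
  next
    show "{0..2 * s + 2 * z - 2} \<subseteq> sumset ?A ?B"
    proof
      fix x assume "x \<in> {0..2 * s + 2 * z - 2}"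
      moreover have "{0..s + z - 1} \<subseteq> ?A"
      proof
        fix u assume "u \<in> {0..s + z - 1}"
        then have "u \<le> s + z - 1" by simp
        then show "u \<in> ?A" using memA by blast
      qed
      moreover have "{0..s + z - 1} \<subseteq> ?B"
      proof
        fix u assume "u \<in> {0..s + z - 1}"
        then have "u \<le> s + z - 1" by simp
        then show "u \<in> ?B" using memB by blast
      qed
      ultimately show "x \<in> sumset ?A ?B" using ivl_sum[of 0 "s + z - 1" ?A 0 "s + z - 1" ?B x] s0 z0 by simp
    qed
  qed
  have "N_age s 1 z lam = card {0..2 * s + 2 * z - 2}" unfolding N_age_def set_eq ..
  then show ?thesis using s0 z0 by simp
qed

lemma N_lam0:
  assumes s0: "s > 0" and t2: "t \<ge> 2" and z0: "z > 0"
  shows "N_age s t z 0 + (t - 1) * (t * s + 1 - (s + z)) = 2 * (t * s) * t + 2 * z - 1"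
proof -
  obtain t1 where t1: "t = Suc t1" using t2 by (cases t) auto
  have t1pos: "t1 \<ge> 1" using t2 t1 by simp
  define a where "a = t * s"
  let ?A = "P_CA s t \<union> P_SA s t z 0"
  let ?B = "P_CB s t 0 \<union> P_SB s t z 0"
  have thdef: "age_theta s t 0 = a" by (simp add: age_theta_def a_def)
  have sa: "s \<le> a" using a_def t1 by simp
  have apos: "a > 0" using sa s0 by simp
  have at: "a * t = a * t1 + a" using t1 by simp
  have q0: "age_q t z 0 = t1" using t1 by (simp add: age_q_def)
  have CA: "u \<in> P_CA s t \<longleftrightarrow> u < a" for u using mem_CA[OF s0, of t u] t1 a_def by simp
  have SA: "u \<in> P_SA s t z 0 \<longleftrightarrow> (\<exists>w. w \<le> z - 1 \<and> u = a * t + w)" for u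
  proof -
    have "u \<in> P_SA s t z 0 \<longleftrightarrow> (\<exists>l w. l < t1 \<and> w < (0::nat) \<and> u = t * s + a * l + w) \<or> (\<exists>w. w \<le> z - 1 - t1 * 0 \<and> u = t * s + a * t1 + w)"
      using mem_SA_gen[of 0 z t u s] z0 t1pos t1 thdef q0 by simp
    then show ?thesis using at a_def by (simp add: add.commute)
  qed
  have memA: "u \<in> ?A \<longleftrightarrow> u < a \<or> (\<exists>w. w \<le> z - 1 \<and> u = a * t + w)" for u
    using CA[of u] SA[of u] by blast
  have CB: "v \<in> P_CB s t 0 \<longleftrightarrow> (\<exists>m c. m \<le> t1 \<and> c \<le> s - 1 \<and> v = a * m + c)" for v
    using mem_CB[of v s t 0] t1 unfolding thdef by simp
  have SB: "v \<in> P_SB s t z 0 \<longleftrightarrow> (\<exists>c. c \<le> z - 1 \<and> v = a * t + c)" for v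
    using mem_SB[of v s t z 0] t1 at unfolding thdef a_def[symmetric] by (simp add: add.commute)
  have memB: "v \<in> ?B \<longleftrightarrow> (\<exists>m c. m \<le> t1 \<and> c \<le> s - 1 \<and> v = a * m + c) \<or> (\<exists>c. c \<le> z - 1 \<and> v = a * t + c)" for v
    using CB[of v] SB[of v] by blast
  define L where "L = (\<lambda>i. if i = 0 then 0 else a * t + a * i)"
  define R where "R = (\<lambda>i. if i = 0 then a * t + a + z - 2 else if i = t then 2 * (a * t) + 2 * z - 2 else a * t + a * i + s + z - 2)"
  have inU: "i \<le> t \<Longrightarrow> L i \<le> x \<Longrightarrow> x \<le> R i \<Longrightarrow> x \<in> (\<Union>i\<le>t. {L i..R i})" for i x by auto
  have R0: "R 0 = a * t + a + z - 2" using R_def by simp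
  have L0: "L 0 = 0" using L_def by simp
  have Rt: "R t = 2 * (a * t) + 2 * z - 2" using R_def t1 by simp
  have Lt: "L t = 2 * (a * t)" using L_def t1 by simp
  have Rm: "R i = a * t + a * i + s + z - 2" if "1 \<le> i" "i \<le> t1" for i using that R_def t1 by simp
  have Lm: "L i = a * t + a * i" if "1 \<le> i" for i using that L_def by simp
  have set_eq: "sumset ?A ?B = (\<Union>i\<le>t. {L i..R i})"
  proof
    show "sumset ?A ?B \<subseteq> (\<Union>i\<le>t. {L i..R i})"
    proof
      fix x assume "x \<in> sumset ?A ?B"
      then obtain u v where uA: "u \<in> ?A" and vB: "v \<in> ?B" and xuv: "x = u + v" by (rule mem_sumsetE)
      from vB[unfolded memB] show "x \<in> (\<Union>i\<le>t. {L i..R i})"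
      proof (elim disjE exE conjE)
        fix m c assume m: "m \<le> t1" and c: "c \<le> s - 1" and v: "v = a * m + c"
        have aml: "a * m \<le> a * t1" using m by simp
        from uA[unfolded memA] show ?thesis
        proof (elim disjE exE conjE)
          assume "u < a"
          then have "x \<le> R 0" unfolding R0 using xuv v aml at sa s0 z0 c by linarith
          then show ?thesis using inU[of 0 x] L0 by simp
        next
          fix w assume w: "w \<le> z - 1" and u: "u = a * t + w"
          show ?thesis
          proof (cases "m = 0")
            case True
            then have "a * m = 0" by simp
            then have "x \<le> R 0" unfolding R0 using xuv v u w c sa s0 z0 by linarith
            then show ?thesis using inU[of 0 x] L0 by simp
          next
            case False
            then have "x \<le> R m" "L m \<le> x" using Rm[of m] Lm[of m] m xuv v u w c s0 z0 by auto
            then show ?thesis using inU[of m x] m t1 by simp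
          qed
        qed
      next
        fix c assume c: "c \<le> z - 1" and v: "v = a * t + c"
        from uA[unfolded memA] show ?thesis
        proof (elim disjE exE conjE)
          assume "u < a"
          then have "x \<le> R 0" unfolding R0 using xuv v c z0 by linarith
          then show ?thesis using inU[of 0 x] L0 by simp
        next
          fix w assume w: "w \<le> z - 1" and u: "u = a * t + w"
          have "x \<le> R t" "L t \<le> x" using Rt Lt xuv v u w c z0 by linarith+
          then show ?thesis using inU[of t x] by simp
        qed
      qed
    qed
  next
    have iA0: "{0..a-1} \<subseteq> ?A"
    proof
      fix u assume "u \<in> {0..a-1}"
      then have "u < a" using apos by auto
      then show "u \<in> ?A" using memA by blast
    qed
    have iAS: "{a * t..a * t + (z - 1)} \<subseteq> ?A"
    proof
      fix u assume u: "u \<in> {a * t..a * t + (z - 1)}"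
      then have "u - a * t \<le> z - 1" "u = a * t + (u - a * t)" by auto
      then show "u \<in> ?A" using memA by blast
    qed
    have iBm: "{a * m..a * m + (s - 1)} \<subseteq> ?B" if "m \<le> t1" for m
    proof
      fix v assume v: "v \<in> {a * m..a * m + (s - 1)}"
      then have "v - a * m \<le> s - 1" "v = a * m + (v - a * m)" by auto
      then show "v \<in> ?B" using memB that by blast
    qed
    have iBS: "{a * t..a * t + (z - 1)} \<subseteq> ?B"
    proof
      fix v assume v: "v \<in> {a * t..a * t + (z - 1)}"
      then have "v - a * t \<le> z - 1" "v = a * t + (v - a * t)" by auto
      then show "v \<in> ?B" using memB by blast
    qed
    show "(\<Union>i\<le>t. {L i..R i}) \<subseteq> sumset ?A ?B"
    proof
      fix x assume "x \<in> (\<Union>i\<le>t. {L i..R i})"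
      then obtain i where it: "i \<le> t" and xL: "L i \<le> x" and xR: "x \<le> R i" by auto
      show "x \<in> sumset ?A ?B"
      proof (cases "i = 0")
        case True
        then have xR0: "x \<le> a * t + a + z - 2" using xR R0 by simp
        show ?thesis
        proof (cases "x < a * t")
          case True
          define m where "m = x div a"
          define om where "om = x mod a"
          have xmo: "x = a * m + om" unfolding m_def om_def by simp
          have o_lt: "om < a" unfolding om_def using apos by simp
          have "x < Suc t1 * a" using True t1 by (simp add: algebra_simps)
          then have "m < Suc t1" unfolding m_def using div_less_iff_less_mult[OF apos] by blast
          then have m1: "m \<le> t1" by simp
          show ?thesis using ivl_sum[OF iA0 iBm[OF m1], of x] xmo o_lt apos s0 by simp
        next
          case False
          then show ?thesis using ivl_sum[OF iA0 iBS, of x] xR0 apos z0 by simp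
        qed
      next
        case False
        show ?thesis
        proof (cases "i = t")
          case True
          then show ?thesis using ivl_sum[OF iAS iBS, of x] xL xR Rt Lt z0 by simp
        next
          case False
          then have i1: "1 \<le> i" "i \<le> t1" using \<open>i \<noteq> 0\<close> it t1 by auto
          then show ?thesis using ivl_sum[OF iAS iBm[of i], of x] xL xR Rm[OF i1] Lm[of i] z0 s0 by simp
        qed
      qed
    qed
  qed
  have mono: "\<forall>i<t. L i \<le> L (Suc i) \<and> R i \<le> R (Suc i)"
  proof (intro allI impI conjI)
    fix i assume i: "i < t"
    show "L i \<le> L (Suc i)" unfolding L_def by auto
    show "R i \<le> R (Suc i)"
    proof (cases "i = 0")
      case True
      then show ?thesis using Rm[of 1] t1pos by (simp add: R0)
    next
      case False
      show ?thesis
      proof (cases "Suc i = t")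
        case True
        then have "i = t1" using t1 by simp
        then have "R i = a * t + a * t1 + s + z - 2" "R (Suc i) = 2 * (a * t) + 2 * z - 2"
          using Rm[of i] Rt \<open>i \<noteq> 0\<close> True by auto
        then show ?thesis using at sa z0 by linarith
      next
        case False
        then show ?thesis using Rm[of i] Rm[of "Suc i"] \<open>i \<noteq> 0\<close> i t1 by simp
      qed
    qed
  qed
  have nonempty: "\<forall>i\<le>t. L i \<le> R i"
  proof (intro allI impI)
    fix i assume i: "i \<le> t"
    show "L i \<le> R i"
    proof (cases "i = 0")
      case True then show ?thesis using L0 by simp
    next
      case False
      show ?thesis
      proof (cases "i = t")
        case True then show ?thesis using Lt Rt z0 by simp
      next
        case False
        then show ?thesis using Rm[of i] Lm[of i] \<open>i \<noteq> 0\<close> i t1 s0 z0 by simp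
      qed
    qed
  qed
  have cc: "card (\<Union>i\<le>t. {L i..R i}) + (\<Sum>i<t. L (Suc i) - Suc (R i)) = Suc (R t) - L 0"
    by (rule chain_card[OF mono nonempty])
  have term0: "L (Suc 0) - Suc (R 0) = 0" using L_def R0 z0 by simp
  have termi: "L (Suc (Suc i)) - Suc (R (Suc i)) = a + 1 - (s + z)" if "i < t1" for i
    using that Rm[of "Suc i"] Lm[of "Suc (Suc i)"] s0 z0 by simp
  have "(\<Sum>i<t. L (Suc i) - Suc (R i)) = (L (Suc 0) - Suc (R 0)) + (\<Sum>i<t1. L (Suc (Suc i)) - Suc (R (Suc i)))"
    unfolding t1 by (rule sum.lessThan_Suc_shift)
  also have "\<dots> = (\<Sum>i<t1. a + 1 - (s + z))" using term0 termi by simp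
  also have "\<dots> = t1 * (a + 1 - (s + z))" by simp
  finally have sum_eq: "(\<Sum>i<t. L (Suc i) - Suc (R i)) = t1 * (a + 1 - (s + z))" .
  have Nc: "N_age s t z 0 = card (\<Union>i\<le>t. {L i..R i})"
    unfolding N_age_def set_eq ..
  have SR: "Suc (R t) - L 0 = 2 * (a * t) + 2 * z - 1" using Rt L0 z0 by simp
  show ?thesis using cc sum_eq Nc SR t1 unfolding a_def by (simp add: mult.commute mult.left_commute)
qed

lemma int_diff_max: "int (x - y) = max 0 (int x - int y)"
  by (cases "y \<le> x") (auto simp: of_nat_diff)

lemma q_facts:
  assumes t2: "t \<ge> 2" and l0: "0 < lam" and lz: "lam < z"
  shows "1 \<le> age_q t z lam" "age_q t z lam \<le> t - 1" "age_q t z lam * lam \<le> z - 1"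
    "age_q t z lam < t - 1 \<Longrightarrow> z \<le> (age_q t z lam + 1) * lam"
proof -
  have q_eq: "age_q t z lam = min ((z - 1) div lam) (t - 1)" using l0 unfolding age_q_def by auto
  have "lam \<le> z - 1" using lz by simp
  then have "1 \<le> (z - 1) div lam" using l0 by (simp add: less_eq_div_iff_mult_less_eq)
  then show "1 \<le> age_q t z lam" using q_eq t2 by simp
  show "age_q t z lam \<le> t - 1" using q_eq by simp
  have "age_q t z lam \<le> (z - 1) div lam" using q_eq by auto
  then have "age_q t z lam * lam \<le> (z - 1) div lam * lam" by simp
  also have "\<dots> \<le> z - 1" by simp
  finally show "age_q t z lam * lam \<le> z - 1" .
  assume "age_q t z lam < t - 1"
  then have "age_q t z lam = (z - 1) div lam" using q_eq by simp
  moreover have "z - 1 < ((z - 1) div lam + 1) * lam"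
    using div_less_iff_less_mult[OF l0, of "z - 1" "(z - 1) div lam + 1"] by simp
  ultimately show "z \<le> (age_q t z lam + 1) * lam" by simp
qed

lemma H_gen:
  assumes s0: "s > 0" and t2: "t \<ge> 2" and l0: "0 < lam" and lz: "lam < z"
  shows "int (N_age s t z lam) = (int (age_q t z lam) + 2) * (int t * int s) + (int t * int s + int lam) * (int t - 1) + 2 * int z - 1
     - (int (age_q t z lam) - 1) * max 0 (int t * int s + 1 - max (int z) (max (int lam + int s) (int z - int (age_q t z lam) * int lam + int s)))
     - max 0 (int t * int s + 1 - max (int z) (int z - int (age_q t z lam) * int lam + int s))"
proof -
  define q where "q = age_q t z lam"
  have q1: "1 \<le> q" and qt: "q \<le> t - 1" and ql: "q * lam \<le> z - 1" using q_facts[OF t2 l0 lz] unfolding q_def by auto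
  have E: "N_age s t z lam + (q - 1) * (t * s + 1 - max z (max (lam + s) (z - q * lam + s))) + (t * s + 1 - max z (z - q * lam + s))
         = (t * s + lam) * t + (t * s + lam) * (q - 1) + 2 * (t * s) + (z - 1 - q * lam) + z"
    using N_gen[OF s0 t2 l0 lz] unfolding q_def .
  have i1: "int (z - q * lam + s) = int z - int q * int lam + int s" using ql by (simp add: of_nat_diff)
  have "z - 1 - q * lam + (1 + q * lam) = z" using ql lz by linarith
  from arg_cong[OF this, of int] have i2: "int (z - 1 - q * lam) = int z - 1 - int q * int lam" by simp
  have i3: "int (q - 1) = int q - 1" using q1 by (simp add: of_nat_diff)
  have i4: "int (t * s + 1 - max z (max (lam + s) (z - q * lam + s))) = max 0 (int t * int s + 1 - max (int z) (max (int lam + int s) (int z - int q * int lam + int s)))"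
    unfolding int_diff_max of_nat_max i1 by simp
  have i5: "int (t * s + 1 - max z (z - q * lam + s)) = max 0 (int t * int s + 1 - max (int z) (int z - int q * int lam + int s))"
    unfolding int_diff_max of_nat_max i1 by simp
  have "int (N_age s t z lam) + (int q - 1) * max 0 (int t * int s + 1 - max (int z) (max (int lam + int s) (int z - int q * int lam + int s)))
        + max 0 (int t * int s + 1 - max (int z) (int z - int q * int lam + int s))
        = (int t * int s + int lam) * int t + (int t * int s + int lam) * (int q - 1) + 2 * (int t * int s) + (int z - 1 - int q * int lam) + int z"
    using arg_cong[OF E, of int] unfolding of_nat_add of_nat_mult i2 i3 i4 i5 by simp
  then show ?thesis unfolding q_def[symmetric] by (simp add: algebra_simps)
qed

locale ar =
  fixes S T Z L Q :: int
  assumes S1: "S \<ge> 1" and T2: "T \<ge> 2" and L1: "1 \<le> L" and LZ: "L < Z" and Q1: "1 \<le> Q" and QT: "Q \<le> T - 1"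
    and QL: "Q * L \<le> Z - 1" and Qlt: "Q < T - 1 \<Longrightarrow> Z \<le> (Q + 1) * L"
begin

definition "A = T * S"
definition "G1 = max 0 (A + 1 - max Z (max (L + S) (Z - Q * L + S)))"
definition "G2 = max 0 (A + 1 - max Z (Z - Q * L + S))"
definition "H = (Q + 2) * A + (A + L) * (T - 1) + 2 * Z - 1 - (Q - 1) * G1 - G2"
definition "U = 2 * A + (A + Z) * (T - 1) + 2 * Z - 1"

lemma SA: "S \<le> A"
proof -
  have "1 * S \<le> T * S" using T2 S1 by (intro mult_right_mono) auto
  then show ?thesis unfolding A_def by simp
qed

lemma b4: assumes "Z > T * S"
  shows "H = (Q + 2) * T * S + (T * S + L) * (T - 1) + 2 * Z - 1"
proof -
  have "G1 = 0" "G2 = 0" unfolding G1_def G2_def using assms A_def by auto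
  then show ?thesis unfolding H_def A_def by (simp add: algebra_simps)
qed

lemma b5: assumes "\<not> Z > T * S" "T * S < L + S - 1"
  shows "H \<ge> U" "3 * T * S + (T * S + L) * (T - 1) + 2 * Z - 1 \<ge> U"
proof -
  have G1: "G1 = 0" unfolding G1_def using assms A_def by auto
  have G2: "G2 \<le> A + 1 - Z" unfolding G2_def using assms A_def by auto
  define P1 where "P1 = (Z - L) * (T - 1)"
  define P2 where "P2 = (S - 2) * (T - 1)"
  define QA where "QA = Q * A"
  have e1: "(Q + 2) * A + (A + L) * (T - 1) + 2 * Z - 1 - U = QA - P1"
    unfolding U_def P1_def QA_def by (simp add: algebra_simps)
  have e2: "P2 = A - S - 2 * T + 2" unfolding P2_def A_def by (simp add: algebra_simps)
  have le1: "P1 \<le> P2" unfolding P1_def P2_def using assms T2 A_def by (intro mult_right_mono) auto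
  have "(Q - 1) * A \<ge> 0" using Q1 SA S1 by simp
  then have qa: "QA \<ge> A" unfolding QA_def by (simp add: algebra_simps)
  have "H = (Q + 2) * A + (A + L) * (T - 1) + 2 * Z - 1 - G2" unfolding H_def G1 by simp
  then show "H \<ge> U" using e1 e2 le1 qa G2 assms A_def LZ T2 by linarith
  have e3: "3 * T * S + (T * S + L) * (T - 1) + 2 * Z - 1 - U = A - P1"
    unfolding U_def P1_def A_def by (simp add: algebra_simps)
  show "3 * T * S + (T * S + L) * (T - 1) + 2 * Z - 1 \<ge> U" using e3 e2 le1 S1 T2 by linarith
qed

lemma b6: assumes "\<not> Z > T * S" "L + S - 1 < Z" "Q * L \<ge> S"
  shows "H = 2 * T * S + (T * S + L) * (T - 1) + (Q + 2) * Z - Q - 1"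
proof -
  have g1: "G1 = A + 1 - Z" and g2: "G2 = A + 1 - Z" unfolding G1_def G2_def using assms A_def by auto
  show ?thesis unfolding H_def g1 g2 A_def by (simp add: algebra_simps)
qed

lemma b7: assumes "\<not> Z > T * S" "L + S - 1 < Z" "\<not> Q * L \<ge> S"
  shows "H \<ge> U" "(T * S + L) * (T + 1) + Q * (Z - 1) - 2 * L + Z + T * S + min 0 (Z + S * (1 - T) - L * Q - 1) \<ge> U"
proof -
  have QT1: "Q = T - 1"
  proof (rule ccontr)
    assume "Q \<noteq> T - 1"
    then have "Z \<le> (Q + 1) * L" using Qlt QT by simp
    then show False using assms by (simp add: algebra_simps)
  qed
  have m1: "max Z (max (L + S) (Z - Q * L + S)) = Z - Q * L + S"
  proof -
    have "Q * L + L < Z" using assms by linarith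
    then show ?thesis using assms by auto
  qed
  have m2: "max Z (Z - Q * L + S) = Z - Q * L + S" using assms by auto
  define g where "g = max 0 (A + 1 - Z + Q * L - S)"
  have G12: "G1 = g" "G2 = g" unfolding G1_def G2_def g_def m1 m2 by (simp_all add: algebra_simps)
  have gle: "g \<le> A + L - Z" unfolding g_def using assms A_def L1 by auto
  have "H - U = (T - 1) * (A + L - Z - g)" unfolding H_def U_def G12 by (simp add: QT1 algebra_simps)
  moreover have "(T - 1) * (A + L - Z - g) \<ge> 0" using gle T2 by simp
  ultimately show "H \<ge> U" by simp
  define X where "X = Z + S * (1 - T) - L * Q - 1"
  have e: "(T * S + L) * (T + 1) + Q * (Z - 1) - 2 * L + Z + T * S + min 0 X - U = A + (T - 1) * (L - 1) - Z + 1 + min 0 X"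
    unfolding U_def A_def QT1 by (simp add: algebra_simps)
  have p1: "(T - 1) * (L - 1) \<ge> 0" using T2 L1 by simp
  have "(T - 1) * 1 \<le> (T - 1) * L" using T2 L1 by (intro mult_left_mono) auto
  then have "T - 1 < S" using assms QT1 by (simp add: algebra_simps)
  moreover have "A + (T - 1) * (L - 1) - Z + 1 + X = S - T + 1" unfolding X_def A_def QT1 by (simp add: algebra_simps)
  ultimately have "A + (T - 1) * (L - 1) - Z + 1 + min 0 X \<ge> 0" using p1 assms A_def by (auto simp: min_def)
  then show "(T * S + L) * (T + 1) + Q * (Z - 1) - 2 * L + Z + T * S + min 0 (Z + S * (1 - T) - L * Q - 1) \<ge> U"
    using e unfolding X_def by linarith
qed

lemma b8: assumes "\<not> Z > T * S" "\<not> T * S < L + S - 1" "\<not> L + S - 1 < Z" "Q * L \<ge> S"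
  shows "H = 2 * T * S + (T * S + L) * (T - 1) + 3 * Z + (L + S - 1) * Q - L - S - 1"
proof -
  have g1: "G1 = A + 1 - L - S" and g2: "G2 = A + 1 - Z" unfolding G1_def G2_def using assms A_def by auto
  show ?thesis unfolding H_def g1 g2 A_def by (simp add: algebra_simps)
qed

lemma b9: assumes "\<not> Z > T * S" "\<not> T * S < L + S - 1" "\<not> L + S - 1 < Z" "\<not> Q * L \<ge> S"
  defines "G9 \<equiv> (T * S + L) * (T + 1) + Q * (S - 1) - 3 * L + 3 * Z - 1 + min 0 (T * S - Z + 1 + L * Q - S)"
  shows "H = G9 \<or> (H \<ge> U \<and> G9 \<ge> U)"
proof (cases "Q < T - 1")
  case True
  have zq: "Z \<le> Q * L + L" using Qlt[OF True] by (simp add: algebra_simps)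
  have g1: "G1 = A + 1 - L - S" and g2: "G2 = A + 1 - Z + Q * L - S" unfolding G1_def G2_def using assms zq A_def by auto
  have mn: "min 0 (T * S - Z + 1 + L * Q - S) = 0" using assms zq by (auto simp: algebra_simps)
  have "H = G9" unfolding H_def G9_def g1 g2 mn A_def by (simp add: algebra_simps)
  then show ?thesis by simp
next
  case False
  then have QT1: "Q = T - 1" using QT by simp
  have G1le: "G1 \<le> A + L - Z" "G1 \<ge> 0" unfolding G1_def using assms A_def L1 by auto
  have G2le: "G2 \<le> A + L - Z" "G2 \<ge> 0" unfolding G2_def using assms A_def L1 by auto
  define X where "X = A + L - Z"
  have "H - U = (T - 1) * X - (T - 2) * G1 - G2" unfolding H_def U_def X_def by (simp add: QT1 algebra_simps)
  moreover have "(T - 2) * G1 \<le> (T - 2) * X" using G1le T2 unfolding X_def by (intro mult_left_mono) auto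
  moreover have "(T - 1) * X = (T - 2) * X + X" by (simp add: algebra_simps)
  ultimately have HU: "H \<ge> U" using G2le unfolding X_def by linarith
  define Y where "Y = T * S - Z + 1 + L * Q - S"
  have e: "G9 - U = (T - 1) * (L + S - 1 - Z) + Z - L + min 0 Y"
    unfolding G9_def U_def A_def Y_def QT1 by (simp add: algebra_simps)
  have p1: "(T - 1) * (L + S - 1 - Z) \<ge> 0" using T2 assms by simp
  have LT: "L * 1 \<le> L * (T - 1)" using T2 L1 by (intro mult_left_mono) auto
  define P where "P = (T - 1) * (L + S - 1 - Z)"
  have "P + Z - L + Y = P + (T * S - S) + L * (T - 1) - L + 1" unfolding Y_def by (simp add: QT1 algebra_simps)
  then have "P + Z - L + Y \<ge> 0" using LT SA A_def p1 unfolding P_def by linarith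
  then have "P + Z - L + min 0 Y \<ge> 0" using p1 LZ unfolding P_def by (auto simp: min_def)
  then have "G9 - U \<ge> 0" using e unfolding P_def by linarith
  then show ?thesis using HU by simp
qed

end

lemma arith0:
  fixes S T Z :: int
  assumes S1: "S \<ge> 1" and T2: "T \<ge> 2" and Z1: "Z \<ge> 1"
  defines "H0 \<equiv> 2 * (T * S) * T + 2 * Z - 1 - (T - 1) * max 0 (T * S + 1 - (S + Z))"
    and "U \<equiv> 2 * (T * S) + (T * S + Z) * (T - 1) + 2 * Z - 1"
    and "G0 \<equiv> (if Z > T * S - S then 2 * S * T^2 + 2 * Z - 1 else S * T^2 + 3 * S * T - 2 * S + T * (Z - 1) + 1)"
  shows "H0 = G0 \<or> (H0 \<ge> U \<and> G0 \<ge> U)"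
proof (cases "Z > T * S - S")
  case True
  then have "max 0 (T * S + 1 - (S + Z)) = 0" by simp
  then have "H0 = G0" unfolding H0_def G0_def using True by (simp add: power2_eq_square algebra_simps)
  then show ?thesis by simp
next
  case False
  then have m: "max 0 (T * S + 1 - (S + Z)) = T * S + 1 - (S + Z)" by simp
  have p: "(T - 1) * (S - 1) \<ge> 0" using S1 T2 by simp
  have "H0 - U = (T - 1) * (S - 1)" unfolding H0_def U_def m by (simp add: algebra_simps)
  moreover have "G0 - U = 2 * (T * S) - 2 * S - T + 2 - Z" unfolding G0_def U_def using False
    by (simp add: power2_eq_square algebra_simps)
  moreover have "(T - 1) * (S - 1) = T * S - S - T + 1" by (simp add: algebra_simps)
  ultimately show ?thesis using p False by auto
qed

lemma Hz_eq:
  assumes s0: "s > 0" and t2: "t \<ge> 2" and z0: "z > 0"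
  shows "int (N_age s t z z) = Gamma s t z z"
proof -
  have Uz: "int (N_age s t z z) = 2 * (int t * int s) + (int t * int s + int z) * (int t - 1) + 2 * int z - 1"
    using N_lamz[OF s0 t2 z0] t2 z0 by (simp add: of_nat_diff)
  have "Gamma s t z z = 2 * int t * int s + (int t * int s + int z) * (int t - 1) + 2 * int z - 1"
    using z0 by (simp add: Gamma_def Let_def)
  then show ?thesis using Uz by (simp add: algebra_simps)
qed

lemma per_lam:
  assumes s0: "s > 0" and t2: "t \<ge> 2" and z0: "z > 0" and lz: "lam \<le> z"
  shows "int (N_age s t z lam) = Gamma s t z lam \<or>
    (int (N_age s t z lam) \<ge> int (N_age s t z z) \<and> Gamma s t z lam \<ge> int (N_age s t z z))"
proof -
  have Uz: "int (N_age s t z z) = 2 * (int t * int s) + (int t * int s + int z) * (int t - 1) + 2 * int z - 1"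
    using N_lamz[OF s0 t2 z0] t2 z0 by (simp add: of_nat_diff)
  consider "lam = 0" | "lam = z" | "0 < lam" "lam < z" using lz by linarith
  then show ?thesis
  proof cases
    case 1
    have e: "N_age s t z 0 + (t - 1) * (t * s + 1 - (s + z)) = 2 * (t * s) * t + 2 * z - 1" by (rule N_lam0[OF s0 t2 z0])
    have "int (N_age s t z 0) = 2 * (int t * int s) * int t + 2 * int z - 1 - (int t - 1) * max 0 (int t * int s + 1 - (int s + int z))"
    proof -
      have e': "N_age s t z 0 + (t - 1) * (t * s + 1 - (s + z)) + 1 = 2 * (t * s) * t + 2 * z" using e z0 by linarith
      have "int (N_age s t z 0) + (int t - 1) * max 0 (int t * int s + 1 - (int s + int z)) + 1 = 2 * (int t * int s) * int t + 2 * int z"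
        using arg_cong[OF e', of int] t2 z0 by (simp add: int_diff_max of_nat_diff add.commute)
      then show ?thesis by simp
    qed
    moreover have "Gamma s t z 0 = (if int z > int t * int s - int s then 2 * int s * (int t)^2 + 2 * int z - 1
        else int s * (int t)^2 + 3 * int s * int t - 2 * int s + int t * (int z - 1) + 1)"
      by (simp add: Gamma_def Let_def)
    ultimately show ?thesis using arith0[of "int s" "int t" "int z"] s0 t2 z0 Uz 1 by simp
  next
    case 2
    have "Gamma s t z z = 2 * int t * int s + (int t * int s + int z) * (int t - 1) + 2 * int z - 1"
      using z0 by (simp add: Gamma_def Let_def)
    then show ?thesis using Uz 2 by (simp add: algebra_simps)
  next
    case 3
    define q where "q = age_q t z lam"
    have qf: "1 \<le> q" "q \<le> t - 1" "q * lam \<le> z - 1" "q < t - 1 \<Longrightarrow> z \<le> (q + 1) * lam"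
      using q_facts[OF t2 3] unfolding q_def by auto
    interpret ar "int s" "int t" "int z" "int lam" "int q"
    proof
      show "1 \<le> int s" using s0 by simp
      show "2 \<le> int t" using t2 by simp
      show "1 \<le> int lam" using 3 by simp
      show "int lam < int z" using 3 by simp
      show "1 \<le> int q" using qf by simp
      show "int q \<le> int t - 1" using qf t2 by simp
      have "q * lam + 1 \<le> z" using qf 3 by linarith
      then have "int q * int lam + 1 \<le> int z" by (metis of_nat_add of_nat_le_iff of_nat_mult of_nat_1)
      then show "int q * int lam \<le> int z - 1" by simp
      assume "int q < int t - 1"
      then have "q < t - 1" using t2 by linarith
      then have "z \<le> (q + 1) * lam" by (rule qf(4))
      then show "int z \<le> (int q + 1) * int lam" by (metis of_nat_add of_nat_le_iff of_nat_mult of_nat_1)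
    qed
    have HN: "int (N_age s t z lam) = H"
      using H_gen[OF s0 t2 3, folded q_def] unfolding H_def G1_def G2_def A_def by simp
    have UN: "int (N_age s t z z) = U" using Uz unfolding U_def A_def by simp
    have th: "int t * int s + int lam = int t * int s + int lam" ..
    show ?thesis
    proof (cases "int z > int t * int s")
      case True
      have "Gamma s t z lam = (int q + 2) * int t * int s + (int t * int s + int lam) * (int t - 1) + 2 * int z - 1"
        using True 3 by (simp add: Gamma_def Let_def q_def)
      then show ?thesis using b4[OF True] HN by simp
    next
      case c4: False
      show ?thesis
      proof (cases "int t * int s < int lam + int s - 1")
        case True
        have "Gamma s t z lam = 3 * int t * int s + (int t * int s + int lam) * (int t - 1) + 2 * int z - 1"
          using True c4 3 by (simp add: Gamma_def Let_def q_def)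
        then show ?thesis using b5[OF c4 True] HN UN by simp
      next
        case c5: False
        show ?thesis
        proof (cases "int lam + int s - 1 < int z")
          case c6: True
          show ?thesis
          proof (cases "int q * int lam \<ge> int s")
            case True
            have "Gamma s t z lam = 2 * int t * int s + (int t * int s + int lam) * (int t - 1) + (int q + 2) * int z - int q - 1"
              using True c4 c5 c6 3 by (simp add: Gamma_def Let_def q_def)
            then show ?thesis using b6[OF c4 c6 True] HN by simp
          next
            case False
            have "Gamma s t z lam = (int t * int s + int lam) * (int t + 1) + int q * (int z - 1) - 2 * int lam + int z + int t * int s
                + min 0 (int z + int s * (1 - int t) - int lam * int q - 1)"
              using False c4 c5 c6 3 by (simp add: Gamma_def Let_def q_def)
            then show ?thesis using b7[OF c4 c6 False] HN UN by simp
          qed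
        next
          case c6: False
          show ?thesis
          proof (cases "int q * int lam \<ge> int s")
            case True
            have "Gamma s t z lam = 2 * int t * int s + (int t * int s + int lam) * (int t - 1) + 3 * int z + (int lam + int s - 1) * int q - int lam - int s - 1"
              using True c4 c5 c6 3 by (simp add: Gamma_def Let_def q_def)
            then show ?thesis using b8[OF c4 c5 c6 True] HN by simp
          next
            case False
            have "Gamma s t z lam = (int t * int s + int lam) * (int t + 1) + int q * (int s - 1) - 3 * int lam + 3 * int z - 1
                + min 0 (int t * int s - int z + 1 + int lam * int q - int s)"
              using False c4 c5 c6 3 by (simp add: Gamma_def Let_def q_def)
            then show ?thesis using b9[OF c4 c5 c6 False] HN UN by simp
          qed
        qed
      qed
    qed
  qed
qed

lemma min_transfer:
  fixes H G :: "nat \<Rightarrow> int"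
  assumes fin: "finite D" and zD: "z \<in> D" and eqz: "H z = G z"
    and key: "\<And>l. l \<in> D \<Longrightarrow> H l = G l \<or> (H l \<ge> H z \<and> G l \<ge> H z)"
  shows "Min (H ` D) = Min (G ` D)"
proof (rule antisym)
  have ne: "D \<noteq> {}" using zD by auto
  have "Min (G ` D) \<in> G ` D" using fin ne by simp
  then obtain m where m: "m \<in> D" "Min (G ` D) = G m" by auto
  have "Min (H ` D) \<le> H m" using fin m by simp
  moreover have "Min (H ` D) \<le> H z" using fin zD by simp
  ultimately show "Min (H ` D) \<le> Min (G ` D)" using key[OF m(1)] m(2) by auto
next
  have ne: "D \<noteq> {}" using zD by auto
  have "Min (H ` D) \<in> H ` D" using fin ne by simp
  then obtain m where m: "m \<in> D" "Min (H ` D) = H m" by auto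
  have "Min (G ` D) \<le> G m" using fin m by simp
  moreover have "Min (G ` D) \<le> G z" using fin zD by simp
  ultimately show "Min (G ` D) \<le> Min (H ` D)" using key[OF m(1)] m(2) eqz by auto
qed

theorem theorem5:
  fixes s t z :: nat
  assumes "s > 0" and "t > 0" and "z > 0"
  shows "(t = 1 \<longrightarrow> N_AGE_CMPC s t z = 2 * s + 2 * z - 1)
       \<and> (t \<ge> 2 \<longrightarrow> int (N_AGE_CMPC s t z) = Min ((\<lambda>lam. Gamma s t z lam) ` {0..z}))"
proof (intro conjI impI)
  assume t1: "t = 1"
  have "(\<lambda>lam. N_age s t z lam) ` {0..z} = {2 * s + 2 * z - 1}"
    using N_t1[OF assms(1) assms(3)] t1 by auto
  then show "N_AGE_CMPC s t z = 2 * s + 2 * z - 1" unfolding N_AGE_CMPC_def by simp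
next
  assume t2: "t \<ge> 2"
  have "int (N_AGE_CMPC s t z) = Min (int ` ((\<lambda>lam. N_age s t z lam) ` {0..z}))"
    unfolding N_AGE_CMPC_def by (rule mono_Min_commute) (auto simp: mono_def)
  also have "\<dots> = Min ((\<lambda>lam. int (N_age s t z lam)) ` {0..z})" by (simp add: image_image)
  also have "\<dots> = Min ((\<lambda>lam. Gamma s t z lam) ` {0..z})"
  proof (rule min_transfer[where z = z])
    show "int (N_age s t z z) = Gamma s t z z" using Hz_eq[OF assms(1) t2 assms(3)] .
    fix l assume "l \<in> {0..z}"
    then show "int (N_age s t z l) = Gamma s t z l \<or> (int (N_age s t z l) \<ge> int (N_age s t z z) \<and> Gamma s t z l \<ge> int (N_age s t z z))"
      using per_lam[OF assms(1) t2 assms(3), of l] by auto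
  qed auto
  finally show "int (N_AGE_CMPC s t z) = Min ((\<lambda>lam. Gamma s t z lam) ` {0..z})" .
qed

end
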